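(* Let $\ell$ be an even positive integer and $w$ an $\ell$-perfect word over $\{0,1\}$. Then there exists an $\ell$-perfect word $z$ over $\{0,1\}$ of length $2|w|$ such that $\mathrm{even}(z)=w$.
   Context: For a finite word $z=a_1\cdots a_m$, $\mathrm{even}(z)=a_2a_4\cdots$. For words $w,u$, $|w|^{al}_u=|\{i: w[i..i+|u|-1]=u,\ i\equiv1\bmod|u|\}|$. A finite binary word $w$ is $\ell$-perfect if $|w|$ is a multiple of $\ell$ and every word $u$ of length $\ell$ satisfies $|w|^{al}_u=|w|/(\ell2^\ell)$. *)

theory Defs
  imports Main Complex_Main
begin

text \<open>Binary words are lists of booleans (False = 0, True = 1); positions in the
paper are 1-based, list indices are 0-based.\<close>

text \<open>even(a_1 ... a_m) = a_2 a_4 ...: the letters at 1-based even positions,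
i.e. at 0-based odd indices.\<close>
definition even_part :: "bool list \<Rightarrow> bool list" where
  "even_part z = map (\<lambda>i. z ! i) (filter odd [0..<length z])"

text \<open>Aligned occurrences: 1-based start positions i with i = 1 mod |u|,
i.e. 0-based start indices divisible by |u|, whose window fits in w.\<close>
definition aligned_count :: "bool list \<Rightarrow> bool list \<Rightarrow> nat" where
  "aligned_count w u = card {i. i + length u \<le> length w \<and> i mod length u = 0
                              \<and> take (length u) (drop i w) = u}"

definition perfect :: "nat \<Rightarrow> bool list \<Rightarrow> bool" where
  "perfect l w \<longleftrightarrow> l dvd length w \<and>
     (\<forall>u. length u = l \<longrightarrow> real (aligned_count w u) = real (length w) / (real l * 2 ^ l))"

end

theory Submission
  imports Defs
begin

definition sig :: "nat \<Rightarrow> nat \<Rightarrow> nat" where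
  "sig h i = (if even (i div h) then i + h else i - h)"

definition pidx :: "nat \<Rightarrow> nat \<Rightarrow> nat \<Rightarrow> nat" where
  "pidx h s r = (if odd r then s*h + r div 2 else (1-s)*h + r div 2)"

definition phi :: "nat \<Rightarrow> nat \<Rightarrow> bool list \<Rightarrow> bool list" where
  "phi h s x = map (\<lambda>r. x ! pidx h s r) [0..<2*h]"

definition vv :: "nat \<Rightarrow> nat \<Rightarrow> bool list \<Rightarrow> bool list" where
  "vv h s u = map (\<lambda>q. u ! (if q div h = s then 2*(q mod h)+1 else 2*(q mod h))) [0..<2*h]"

lemma phi_vv:
  assumes "s < 2" "length u = 2*h"
  shows "phi h s (vv h s u) = u"
proof (rule nth_equalityI)
  show "length (phi h s (vv h s u)) = length u" using assms by (simp add: phi_def)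
next
  fix r assume r: "r < length (phi h s (vv h s u))"
  hence r2: "r < 2*h" by (simp add: phi_def)
  hence hp: "h > 0" by auto
  have t: "r div 2 < h" using r2 by auto
  show "phi h s (vv h s u) ! r = u ! r"
  proof (cases "odd r")
    case True
    have i: "s*h + r div 2 < 2*h" using assms(1) t by (auto simp: less_2_cases_iff)
    have d: "(s*h + r div 2) div h = s" using t hp by simp
    have m: "(s*h + r div 2) mod h = r div 2" using t hp by simp
    have "2 * (r div 2) + 1 = r" using True by presburger
    then show ?thesis using True r2 i d m by (simp add: phi_def vv_def pidx_def)
  next
    case False
    have i: "(1-s)*h + r div 2 < 2*h" using assms(1) t by (auto simp: less_2_cases_iff)
    have d: "((1-s)*h + r div 2) div h = 1-s" using t hp by simp
    have ne: "1 - s \<noteq> s" using assms(1) by arith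
    have m: "((1-s)*h + r div 2) mod h = r div 2" using t hp by simp
    have "2 * (r div 2) = r" using False by presburger
    then show ?thesis using False r2 i d m ne by (simp add: phi_def vv_def pidx_def)
  qed
qed

lemma vv_phi:
  assumes "s < 2" "length x = 2*h"
  shows "vv h s (phi h s x) = x"
proof (rule nth_equalityI)
  show "length (vv h s (phi h s x)) = length x" using assms by (simp add: vv_def)
next
  fix q assume q: "q < length (vv h s (phi h s x))"
  hence q2: "q < 2*h" by (simp add: vv_def)
  hence hp: "h > 0" by auto
  have mq: "q mod h < h" using hp by simp
  have qd: "q div h < 2" using q2 hp by (simp add: less_mult_imp_div_less mult.commute)
  have qe: "q = (q div h) * h + q mod h" by simp
  show "vv h s (phi h s x) ! q = x ! q"
  proof (cases "q div h = s")
    case True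
    have i: "2*(q mod h)+1 < 2*h" using mq by auto
    have "s*h + (2*(q mod h)+1) div 2 = q" using True qe by simp
    then show ?thesis using True q2 i by (simp add: phi_def vv_def pidx_def)
  next
    case False
    have i: "2*(q mod h) < 2*h" using mq by auto
    have "1 - s = q div h" using False qd assms(1) by auto
    hence "(1-s)*h + (2*(q mod h)) div 2 = q" using qe by simp
    then show ?thesis using False q2 i by (simp add: phi_def vv_def pidx_def)
  qed
qed

lemma phi_eq_iff:
  assumes "s < 2" "length x = 2*h" "length u = 2*h"
  shows "phi h s x = u \<longleftrightarrow> x = vv h s u"
  using assms phi_vv vv_phi by metis

lemma length_vv: "length (vv h s u) = 2*h" by (simp add: vv_def)


lemma filter_odd_upt: "filter odd [0..<N] = map (\<lambda>i. 2*i+1) [0..<N div 2]"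
proof (induction N)
  case (Suc N)
  show ?case
  proof (cases "odd N")
    case True
    have "Suc N div 2 = Suc (N div 2)" using True by presburger
    moreover have "2 * (N div 2) + 1 = N" using True by presburger
    ultimately show ?thesis using Suc True by simp
  next
    case False
    have "Suc N div 2 = N div 2" using False by presburger
    then show ?thesis using Suc False by simp
  qed
qed simp

lemma even_part_nth: "even_part z = map (\<lambda>i. z ! (2*i+1)) [0..<length z div 2]"
  by (simp add: even_part_def filter_odd_upt)

lemma card_sum: "card {k. k<(n::nat) \<and> P k} = (\<Sum>k<n. if P k then 1 else 0::nat)"
proof (induction n)
  case (Suc n)
  have "{k. k<Suc n \<and> P k} = (if P n then insert n {k. k<n \<and> P k} else {k. k<n \<and> P k})"
    by (auto simp: less_Suc_eq)
  then show ?case using Suc by simp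
qed simp

lemma sum_split2: "(\<Sum>j<2*(n::nat). f j) = (\<Sum>k<n. f (2*k)) + (\<Sum>k<n. (f (2*k+1)::nat))"
proof (induction n)
  case (Suc n)
  have "2 * Suc n = Suc (Suc (2*n))" by simp
  then show ?case using Suc by simp
qed simp

lemma card_split2:
  "card {j. j < 2*(n::nat) \<and> P j} = card {k. k<n \<and> P (2*k)} + card {k. k<n \<and> P (2*k+1)}"
  by (simp only: card_sum sum_split2)

lemma aligned_blocks:
  assumes "l > 0" "length x = n*l" "length u = l"
  shows "aligned_count x u = card {k. k<n \<and> take l (drop (k*l) x) = u}"
proof -
  have "{i. i + length u \<le> length x \<and> i mod length u = 0 \<and> take (length u) (drop i x) = u}
      = (\<lambda>k. k*l) ` {k. k<n \<and> take l (drop (k*l) x) = u}"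
  proof (rule set_eqI, rule iffI)
    fix i assume "i \<in> {i. i + length u \<le> length x \<and> i mod length u = 0 \<and> take (length u) (drop i x) = u}"
    hence i: "i + l \<le> n*l" "i mod l = 0" "take l (drop i x) = u" using assms by auto
    obtain q where e: "i = q * l" using i(2) by (metis mod_eq_0_iff_dvd dvd_def mult.commute)
    have "q < n"
    proof (rule ccontr)
      assume "\<not> q < n"
      hence "n * l \<le> q * l" by (intro mult_le_mono1) simp
      thus False using i(1) assms(1) e by linarith
    qed
    then show "i \<in> (\<lambda>k. k*l) ` {k. k<n \<and> take l (drop (k*l) x) = u}"
      using e i(3) by auto
  next
    fix i assume "i \<in> (\<lambda>k. k*l) ` {k. k<n \<and> take l (drop (k*l) x) = u}"
    then obtain k where k: "i = k*l" "k<n" "take l (drop (k*l) x) = u" by auto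
    have "k*l + l \<le> n*l" using k(2)
      by (metis Suc_leI add.commute mult_Suc mult_le_mono1)
    then show "i \<in> {i. i + length u \<le> length x \<and> i mod length u = 0 \<and> take (length u) (drop i x) = u}"
      using k assms by simp
  qed
  moreover have "inj_on (\<lambda>k. k*l) {k. k<n \<and> take l (drop (k*l) x) = u}"
    using assms(1) by (auto simp: inj_on_def)
  ultimately show ?thesis unfolding aligned_count_def by (simp add: card_image)
qed

lemma block_lemma:
  assumes "length w = n*(2*h)" "k < n" "s < 2"
  shows "take (2*h) (drop ((2*k+s)*(2*h))
           (map (\<lambda>p. w ! (if odd p then p div 2 else sig h (p div 2))) [0..<2*length w]))
         = phi h s (take (2*h) (drop (k*(2*h)) w))"
proof -
  have kn: "Suc k \<le> n" using assms(2) by simp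
  have b1: "(2*k+s)*(2*h) + 2*h \<le> 2 * length w"
  proof -
    have "(2*k+s)*(2*h) + 2*h = (2*k+s+1)*(2*h)" by (simp add: algebra_simps)
    also have "\<dots> \<le> (2*n)*(2*h)" using kn assms(3) by (intro mult_le_mono1) simp
    finally show ?thesis using assms(1) by (simp add: algebra_simps)
  qed
  have b2: "k*(2*h) + 2*h \<le> length w"
  proof -
    have "k*(2*h) + 2*h = Suc k * (2*h)" by simp
    also have "\<dots> \<le> n*(2*h)" using kn by (intro mult_le_mono1) simp
    finally show ?thesis using assms(1) by simp
  qed
  show ?thesis
  proof (rule nth_equalityI)
    show "length (take (2*h) (drop ((2*k+s)*(2*h))
           (map (\<lambda>p. w ! (if odd p then p div 2 else sig h (p div 2))) [0..<2*length w])))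
         = length (phi h s (take (2*h) (drop (k*(2*h)) w)))"
      using b1 by (simp add: phi_def)
  next
    fix r assume "r < length (take (2*h) (drop ((2*k+s)*(2*h))
           (map (\<lambda>p. w ! (if odd p then p div 2 else sig h (p div 2))) [0..<2*length w])))"
    hence r: "r < 2*h" using b1 by simp
    have t: "r div 2 < h" using r by auto
    have hp: "h > 0" using r by auto
    define a where "a = (2*k+s)*(2*h) + r"
    have aL: "a < 2 * length w" using b1 r a_def by simp
    have oa: "odd a = odd r" unfolding a_def by simp
    have ad: "a div 2 = (2*k+s)*h + r div 2" unfolding a_def by simp
    have L: "take (2*h) (drop ((2*k+s)*(2*h))
           (map (\<lambda>p. w ! (if odd p then p div 2 else sig h (p div 2))) [0..<2*length w])) ! r
          = w ! (if odd r then (2*k+s)*h + r div 2 else sig h ((2*k+s)*h + r div 2))"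
      using r aL oa ad by (simp add: a_def)
    define idx where "idx = pidx h s r"
    have idx: "idx < 2*h" using t assms(3) by (auto simp: idx_def pidx_def less_2_cases_iff)
    have R0: "take (2*h) (drop (k*(2*h)) w) ! idx = w ! (k*(2*h) + idx)"
      using idx b2 by simp
    have R: "phi h s (take (2*h) (drop (k*(2*h)) w)) ! r = w ! (k*(2*h) + idx)"
      using r R0 unfolding phi_def idx_def by simp
    have dv: "((2*k+s)*h + r div 2) div h = 2*k+s" using t hp by simp
    have "(if odd r then (2*k+s)*h + r div 2 else sig h ((2*k+s)*h + r div 2)) = k*(2*h) + idx"
    proof (cases "odd r")
      case True then show ?thesis by (simp add: idx_def pidx_def algebra_simps)
    next
      case False
      show ?thesis
      proof (cases "s = 0")
        case True
        then show ?thesis using False dv by (simp add: idx_def pidx_def sig_def algebra_simps)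
      next
        case s1: False
        hence "s = 1" using assms(3) by simp
        then show ?thesis using False dv by (simp add: idx_def pidx_def sig_def algebra_simps)
      qed
    qed
    then show "take (2*h) (drop ((2*k+s)*(2*h))
           (map (\<lambda>p. w ! (if odd p then p div 2 else sig h (p div 2))) [0..<2*length w])) ! r
          = phi h s (take (2*h) (drop (k*(2*h)) w)) ! r" using L R by simp
  qed
qed


lemma len_block:
  assumes "length w = n*l" "k < n"
  shows "length (take l (drop (k*l) w)) = l"
proof -
  have "Suc k * l \<le> n * l" using assms(2) by (intro mult_le_mono1) simp
  thus ?thesis using assms(1) by simp
qed

theorem corollary11:
  fixes l :: nat and w :: "bool list"
  assumes "l > 0" and "even l" and "perfect l w"
  shows "\<exists>z. perfect l z \<and> length z = 2 * length w \<and> even_part z = w"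
proof -
  obtain h where l: "l = 2*h" using assms(2) by (auto elim: evenE)
  have hp: "h > 0" using assms(1) l by simp
  have dv: "l dvd length w" and cw: "\<And>u. length u = l \<Longrightarrow>
      real (aligned_count w u) = real (length w) / (real l * 2 ^ l)"
    using assms(3) unfolding perfect_def by auto
  obtain n where Ln: "length w = n*l" using dv by (auto simp: dvd_def mult.commute)
  define z where "z = map (\<lambda>p. w ! (if odd p then p div 2 else sig h (p div 2))) [0..<2*length w]"
  have lz: "length z = 2 * length w" by (simp add: z_def)
  have ez: "even_part z = w"
  proof -
    have "even_part z = map (\<lambda>i. z ! (2*i+1)) [0..<length w]"
      by (simp add: even_part_nth lz)
    also have "\<dots> = w"
    proof (rule nth_equalityI)
      fix i assume "i < length (map (\<lambda>i. z ! (2*i+1)) [0..<length w])"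
      hence "i < length w" by simp
      thus "map (\<lambda>i. z ! (2*i+1)) [0..<length w] ! i = w ! i" by (simp add: z_def)
    qed simp
    finally show ?thesis .
  qed
  have cnt: "card {k. k<n \<and> take l (drop ((2*k+s)*l) z) = u} = aligned_count w (vv h s u)"
    if u: "length u = l" and s: "s < 2" for u s
  proof -
    have "card {k. k<n \<and> take l (drop ((2*k+s)*l) z) = u}
        = card {k. k<n \<and> take l (drop (k*l) w) = vv h s u}"
    proof (rule arg_cong[where f=card], rule Collect_cong)
      fix k
      show "(k<n \<and> take l (drop ((2*k+s)*l) z) = u) = (k<n \<and> take l (drop (k*l) w) = vv h s u)"
      proof (cases "k < n")
        case True
        have b: "take l (drop ((2*k+s)*l) z) = phi h s (take l (drop (k*l) w))"
          using block_lemma[of w n h k s] Ln True s l by (simp add: z_def)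
        have lb: "length (take l (drop (k*l) w)) = 2*h" using len_block[OF Ln True] l by simp
        show ?thesis using True b phi_eq_iff[OF s lb] u l by simp
      qed simp
    qed
    also have "\<dots> = aligned_count w (vv h s u)"
      using aligned_blocks[OF assms(1) Ln, of "vv h s u"] by (simp add: length_vv l)
    finally show ?thesis .
  qed
  have "perfect l z"
    unfolding perfect_def
  proof (intro conjI allI impI)
    show "l dvd length z" using dv lz by simp
  next
    fix u :: "bool list" assume u: "length u = l"
    have Lz: "length z = (2*n)*l" using lz Ln by simp
    have "aligned_count z u = card {j. j < 2*n \<and> take l (drop (j*l) z) = u}"
      using aligned_blocks[OF assms(1) Lz u] .
    also have "\<dots> = card {k. k<n \<and> take l (drop ((2*k+0)*l) z) = u}
                   + card {k. k<n \<and> take l (drop ((2*k+1)*l) z) = u}"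
      by (simp add: card_split2)
    also have "\<dots> = aligned_count w (vv h 0 u) + aligned_count w (vv h 1 u)"
      using cnt[OF u, of 0] cnt[OF u, of 1] by simp
    finally have "real (aligned_count z u)
       = real (aligned_count w (vv h 0 u)) + real (aligned_count w (vv h 1 u))" by simp
    also have "\<dots> = 2 * (real (length w) / (real l * 2 ^ l))"
      using cw[of "vv h 0 u"] cw[of "vv h 1 u"] by (simp add: length_vv l)
    also have "\<dots> = real (length z) / (real l * 2 ^ l)" using lz by simp
    finally show "real (aligned_count z u) = real (length z) / (real l * 2 ^ l)" .
  qed
  thus ?thesis using lz ez by blast
qed

end
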